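(* For $n\geq 5$, the commutator subgroup $\Gamma_2(VB_n)$ of the virtual braid group $VB_n$ is perfect, i.e. $\Gamma_2(VB_n)=[\Gamma_2(VB_n),\Gamma_2(VB_n)]$.
   Context: The virtual braid group $VB_n$ is the group with generators $\sigma_i,\rho_i$ ($i=1,\dots,n-1$) and defining relations: $\sigma_i\sigma_{i+1}\sigma_i=\sigma_{i+1}\sigma_i\sigma_{i+1}$ ($1\le i\le n-2$); $\sigma_i\sigma_j=\sigma_j\sigma_i$ ($|i-j|\geq 2$); $\rho_i\rho_{i+1}\rho_i=\rho_{i+1}\rho_i\rho_{i+1}$ ($1\le i\le n-2$); $\rho_i\rho_j=\rho_j\rho_i$ ($|i-j|\geq 2$); $\rho_i^2=1$; $\sigma_i\rho_j=\rho_j\sigma_i$ ($|i-j|\geq2$); $\rho_i\rho_{i+1}\sigma_i=\sigma_{i+1}\rho_i\rho_{i+1}$ ($1\le i\le n-2$). $\Gamma_2(G)=[G,G]$. *)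

theory Defs
  imports "HOL-Algebra.Algebra"
begin

text \<open>Generators of the virtual braid group VB_n (1-based indices, 1 \<le> i \<le> n-1).\<close>
datatype vgen = Sig nat | Rho nat

text \<open>A letter is a generator with an exponent sign: True = +1, False = -1.\<close>
type_synonym vletter = "bool \<times> vgen"
type_synonym vword = "vletter list"

fun gidx :: "vgen \<Rightarrow> nat" where
  "gidx (Sig i) = i" | "gidx (Rho i) = i"

definition valid_letter :: "nat \<Rightarrow> vletter \<Rightarrow> bool" where
  "valid_letter n x \<longleftrightarrow> 1 \<le> gidx (snd x) \<and> gidx (snd x) \<le> n - 1"

definition valid_word :: "nat \<Rightarrow> vword \<Rightarrow> bool" where
  "valid_word n w \<longleftrightarrow> (\<forall>x\<in>set w. valid_letter n x)"

definition inv_letter :: "vletter \<Rightarrow> vletter" where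
  "inv_letter x = (\<not> fst x, snd x)"

abbreviation s :: "nat \<Rightarrow> vletter" where "s i \<equiv> (True, Sig i)"
abbreviation r :: "nat \<Rightarrow> vletter" where "r i \<equiv> (True, Rho i)"

text \<open>Defining relations of VB_n, as pairs (lhs, rhs) meaning lhs = rhs.\<close>
definition vb_relators :: "nat \<Rightarrow> (vword \<times> vword) set" where
  "vb_relators n =
     {([s i, s (i+1), s i], [s (i+1), s i, s (i+1)]) | i. 1 \<le> i \<and> i \<le> n - 2}
   \<union> {([s i, s j], [s j, s i]) | i j. 1 \<le> i \<and> i \<le> n - 1 \<and> 1 \<le> j \<and> j \<le> n - 1
                                    \<and> (i \<ge> j + 2 \<or> j \<ge> i + 2)}
   \<union> {([r i, r (i+1), r i], [r (i+1), r i, r (i+1)]) | i. 1 \<le> i \<and> i \<le> n - 2}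
   \<union> {([r i, r j], [r j, r i]) | i j. 1 \<le> i \<and> i \<le> n - 1 \<and> 1 \<le> j \<and> j \<le> n - 1
                                    \<and> (i \<ge> j + 2 \<or> j \<ge> i + 2)}
   \<union> {([r i, r i], []) | i. 1 \<le> i \<and> i \<le> n - 1}
   \<union> {([s i, r j], [r j, s i]) | i j. 1 \<le> i \<and> i \<le> n - 1 \<and> 1 \<le> j \<and> j \<le> n - 1
                                    \<and> (i \<ge> j + 2 \<or> j \<ge> i + 2)}
   \<union> {([r i, r (i+1), s i], [s (i+1), r i, r (i+1)]) | i. 1 \<le> i \<and> i \<le> n - 2}"

inductive vb_step :: "nat \<Rightarrow> vword \<Rightarrow> vword \<Rightarrow> bool" for n where
  cancel: "\<lbrakk>valid_word n a; valid_word n b; valid_letter n x\<rbrakk>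
           \<Longrightarrow> vb_step n (a @ [x, inv_letter x] @ b) (a @ b)"
| relator: "\<lbrakk>valid_word n a; valid_word n b; (u, v) \<in> vb_relators n\<rbrakk>
           \<Longrightarrow> vb_step n (a @ u @ b) (a @ v @ b)"

definition vb_eq :: "nat \<Rightarrow> vword \<Rightarrow> vword \<Rightarrow> bool" where
  "vb_eq n = (\<lambda>u v. vb_step n u v \<or> vb_step n v u)\<^sup>*\<^sup>*"

definition vb_class :: "nat \<Rightarrow> vword \<Rightarrow> vword set" where
  "vb_class n w = {v. vb_eq n w v}"

definition VB :: "nat \<Rightarrow> vword set monoid" where
  "VB n = \<lparr> carrier = {vb_class n w | w. valid_word n w},
            monoid.mult = (\<lambda>A B. vb_class n ((SOME a. a \<in> A) @ (SOME b. b \<in> B))),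
            monoid.one = vb_class n [] \<rparr>"

end

theory Submission
  imports Defs
begin


lemma valid_append[simp]: "valid_word n (u @ v) = (valid_word n u \<and> valid_word n v)"
  by (auto simp: valid_word_def)
lemma valid_Cons[simp]: "valid_word n (x # u) = (valid_letter n x \<and> valid_word n u)"
  by (auto simp: valid_word_def)
lemma valid_Nil[simp]: "valid_word n []"
  by (auto simp: valid_word_def)
lemma valid_inv[simp]: "valid_letter n (inv_letter x) = valid_letter n x"
  by (simp add: valid_letter_def inv_letter_def)
lemma inv_inv[simp]: "inv_letter (inv_letter x) = x"
  by (cases x) (simp add: inv_letter_def)

lemma relators_valid: "(u,v) \<in> vb_relators n \<Longrightarrow> valid_word n u \<and> valid_word n v"
  unfolding vb_relators_def by (auto simp: valid_letter_def)

lemma step_valid: "vb_step n u v \<Longrightarrow> valid_word n u \<and> valid_word n v"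
  by (induction rule: vb_step.induct) (auto dest: relators_valid)

lemma eq_valid: "vb_eq n u v \<Longrightarrow> valid_word n u \<Longrightarrow> valid_word n v"
  unfolding vb_eq_def by (induction rule: rtranclp_induct) (auto dest: step_valid)

lemma eq_refl: "vb_eq n u u" unfolding vb_eq_def by simp

lemma eq_trans: "vb_eq n u v \<Longrightarrow> vb_eq n v w \<Longrightarrow> vb_eq n u w"
  unfolding vb_eq_def by (rule rtranclp_trans)

lemma eq_sym: "vb_eq n u v \<Longrightarrow> vb_eq n v u"
  unfolding vb_eq_def
proof (induction rule: rtranclp_induct)
  case base then show ?case by simp
next
  case (step y z)
  then have "(\<lambda>u v. vb_step n u v \<or> vb_step n v u) z y" by auto
  then show ?case by (rule converse_rtranclp_into_rtranclp) (rule step.IH)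
qed

lemma step_eq: "vb_step n u v \<Longrightarrow> vb_eq n u v"
  unfolding vb_eq_def by auto

lemma step_appR: "vb_step n u v \<Longrightarrow> valid_word n w \<Longrightarrow> vb_step n (u@w) (v@w)"
proof (induction rule: vb_step.induct)
  case (cancel a b x) then show ?case using vb_step.cancel[of n a "b@w" x] by simp
next
  case (relator a b u v) then show ?case using vb_step.relator[of n a "b@w" u v] by simp
qed

lemma step_appL: "vb_step n u v \<Longrightarrow> valid_word n w \<Longrightarrow> vb_step n (w@u) (w@v)"
proof (induction rule: vb_step.induct)
  case (cancel a b x) then show ?case using vb_step.cancel[of n "w@a" "b" x] by simp
next
  case (relator a b u v) then show ?case using vb_step.relator[of n "w@a" "b" u v] by simp
qed

lemma eq_appR: "vb_eq n u v \<Longrightarrow> valid_word n w \<Longrightarrow> vb_eq n (u@w) (v@w)"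
  unfolding vb_eq_def
proof (induction rule: rtranclp_induct)
  case base then show ?case by simp
next
  case (step y z)
  then have "(\<lambda>u v. vb_step n u v \<or> vb_step n v u) (y@w) (z@w)" using step_appR by auto
  then show ?case by (rule rtranclp.rtrancl_into_rtrancl[OF step.IH[OF step.prems]])
qed

lemma eq_appL: "vb_eq n u v \<Longrightarrow> valid_word n w \<Longrightarrow> vb_eq n (w@u) (w@v)"
  unfolding vb_eq_def
proof (induction rule: rtranclp_induct)
  case base then show ?case by simp
next
  case (step y z)
  then have "(\<lambda>u v. vb_step n u v \<or> vb_step n v u) (w@y) (w@z)" using step_appL by auto
  then show ?case by (rule rtranclp.rtrancl_into_rtrancl[OF step.IH[OF step.prems]])
qed

lemma eq_app: "vb_eq n u u' \<Longrightarrow> vb_eq n v v' \<Longrightarrow> valid_word n u \<Longrightarrow> valid_word n v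
   \<Longrightarrow> vb_eq n (u@v) (u'@v')"
  by (meson eq_appL eq_appR eq_trans eq_valid)

lemma class_eq_iff: "vb_class n u = vb_class n v \<longleftrightarrow> vb_eq n u v"
proof
  assume "vb_class n u = vb_class n v"
  then have "v \<in> vb_class n u" by (simp add: vb_class_def eq_refl)
  then show "vb_eq n u v" by (simp add: vb_class_def)
next
  assume "vb_eq n u v"
  then show "vb_class n u = vb_class n v" unfolding vb_class_def
    by (auto intro: eq_trans eq_sym)
qed

lemma some_class: "vb_eq n w (SOME a. a \<in> vb_class n w)"
proof -
  have "w \<in> vb_class n w" by (simp add: vb_class_def eq_refl)
  then have "(SOME a. a \<in> vb_class n w) \<in> vb_class n w" by (rule someI)
  then show ?thesis by (simp add: vb_class_def)
qed

lemma mult_class: "valid_word n u \<Longrightarrow> valid_word n v \<Longrightarrow>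
   vb_class n u \<otimes>\<^bsub>VB n\<^esub> vb_class n v = vb_class n (u@v)"
  unfolding VB_def using eq_app[OF some_class some_class] class_eq_iff eq_sym by simp

lemma carrier_VB: "carrier (VB n) = {vb_class n w | w. valid_word n w}" by (simp add: VB_def)
lemma one_VB: "\<one>\<^bsub>VB n\<^esub> = vb_class n []" by (simp add: VB_def)

definition winv :: "vword \<Rightarrow> vword" where "winv w = rev (map inv_letter w)"

lemma valid_winv[simp]: "valid_word n (winv w) = valid_word n w"
  by (auto simp: winv_def valid_word_def)

lemma winv_cancel: "valid_word n w \<Longrightarrow> vb_eq n (winv w @ w) []"
proof (induction w)
  case Nil then show ?case by (simp add: winv_def eq_refl)
next
  case (Cons x w)
  have "vb_step n (winv w @ [inv_letter x, inv_letter (inv_letter x)] @ w) (winv w @ w)"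
    using Cons.prems by (intro vb_step.cancel) auto
  then have "vb_eq n (winv (x#w) @ x # w) (winv w @ w)"
    by (simp add: winv_def step_eq)
  then show ?case using Cons eq_trans by auto
qed

lemma group_VB: "group (VB n)"
proof (rule groupI)
  fix x y assume "x \<in> carrier (VB n)" "y \<in> carrier (VB n)"
  then show "x \<otimes>\<^bsub>VB n\<^esub> y \<in> carrier (VB n)"
    by (auto simp: carrier_VB mult_class)
next
  show "\<one>\<^bsub>VB n\<^esub> \<in> carrier (VB n)" by (auto simp: carrier_VB one_VB)
next
  fix x y z assume "x \<in> carrier (VB n)" "y \<in> carrier (VB n)" "z \<in> carrier (VB n)"
  then show "x \<otimes>\<^bsub>VB n\<^esub> y \<otimes>\<^bsub>VB n\<^esub> z = x \<otimes>\<^bsub>VB n\<^esub> (y \<otimes>\<^bsub>VB n\<^esub> z)"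
    by (auto simp: carrier_VB mult_class)
next
  fix x assume "x \<in> carrier (VB n)"
  then show "\<one>\<^bsub>VB n\<^esub> \<otimes>\<^bsub>VB n\<^esub> x = x"
    by (auto simp: carrier_VB mult_class one_VB)
next
  fix x assume "x \<in> carrier (VB n)"
  then obtain w where w: "valid_word n w" "x = vb_class n w" by (auto simp: carrier_VB)
  then have "vb_class n (winv w) \<otimes>\<^bsub>VB n\<^esub> x = \<one>\<^bsub>VB n\<^esub>"
    by (simp add: mult_class one_VB class_eq_iff winv_cancel)
  moreover have "vb_class n (winv w) \<in> carrier (VB n)" using w by (auto simp: carrier_VB)
  ultimately show "\<exists>y\<in>carrier (VB n). y \<otimes>\<^bsub>VB n\<^esub> x = \<one>\<^bsub>VB n\<^esub>" by blast
qed


lemma relI1: "1 \<le> i \<Longrightarrow> i \<le> n - 2 \<Longrightarrow> ([s i, s (i+1), s i], [s (i+1), s i, s (i+1)]) \<in> vb_relators n"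
  unfolding vb_relators_def by (rule UnI1)+ blast
lemma relI2: "1 \<le> i \<Longrightarrow> i \<le> n - 1 \<Longrightarrow> 1 \<le> j \<Longrightarrow> j \<le> n - 1 \<Longrightarrow> j \<ge> i + 2 \<Longrightarrow> ([s i, s j], [s j, s i]) \<in> vb_relators n"
  unfolding vb_relators_def by (rule UnI1, rule UnI1, rule UnI1, rule UnI1, rule UnI1, rule UnI2) blast
lemma relI3: "1 \<le> i \<Longrightarrow> i \<le> n - 2 \<Longrightarrow> ([r i, r (i+1), r i], [r (i+1), r i, r (i+1)]) \<in> vb_relators n"
  unfolding vb_relators_def by (rule UnI1, rule UnI1, rule UnI1, rule UnI1, rule UnI2) blast
lemma relI4: "1 \<le> i \<Longrightarrow> i \<le> n - 1 \<Longrightarrow> 1 \<le> j \<Longrightarrow> j \<le> n - 1 \<Longrightarrow> j \<ge> i + 2 \<Longrightarrow> ([r i, r j], [r j, r i]) \<in> vb_relators n"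
  unfolding vb_relators_def by (rule UnI1, rule UnI1, rule UnI1, rule UnI2) blast
lemma relI6: "1 \<le> i \<Longrightarrow> i \<le> n - 1 \<Longrightarrow> 1 \<le> j \<Longrightarrow> j \<le> n - 1 \<Longrightarrow> j \<ge> i + 2 \<Longrightarrow> ([s i, r j], [r j, s i]) \<in> vb_relators n"
  unfolding vb_relators_def by (rule UnI1, rule UnI2) blast


definition SG :: "nat \<Rightarrow> nat \<Rightarrow> vword set" where "SG n i = vb_class n [s i]"
definition RG :: "nat \<Rightarrow> nat \<Rightarrow> vword set" where "RG n i = vb_class n [r i]"

lemma rel_eq: "(u,v) \<in> vb_relators n \<Longrightarrow> vb_class n u = vb_class n v"
  using vb_step.relator[of n "[]" "[]" u v] by (simp add: class_eq_iff step_eq)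

lemma mult2: "valid_letter n a \<Longrightarrow> valid_letter n b \<Longrightarrow>
  vb_class n [a] \<otimes>\<^bsub>VB n\<^esub> vb_class n [b] = vb_class n [a, b]"
  by (simp add: mult_class)
lemma mult3: "valid_letter n a \<Longrightarrow> valid_letter n b \<Longrightarrow> valid_letter n c \<Longrightarrow>
  vb_class n [a] \<otimes>\<^bsub>VB n\<^esub> vb_class n [b] \<otimes>\<^bsub>VB n\<^esub> vb_class n [c] = vb_class n [a, b, c]"
  by (simp add: mult_class)

lemma SG_carrier: "1 \<le> i \<Longrightarrow> i \<le> n - 1 \<Longrightarrow> SG n i \<in> carrier (VB n)"
  unfolding SG_def carrier_VB by (auto simp: valid_letter_def)
lemma RG_carrier: "1 \<le> i \<Longrightarrow> i \<le> n - 1 \<Longrightarrow> RG n i \<in> carrier (VB n)"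
  unfolding RG_def carrier_VB by (auto simp: valid_letter_def)

lemma braidS: assumes "1 \<le> i" "i \<le> n - 2"
  shows "SG n i \<otimes>\<^bsub>VB n\<^esub> SG n (i+1) \<otimes>\<^bsub>VB n\<^esub> SG n i = SG n (i+1) \<otimes>\<^bsub>VB n\<^esub> SG n i \<otimes>\<^bsub>VB n\<^esub> SG n (i+1)"
proof -
  have "vb_class n [s i, s (i+1), s i] = vb_class n [s (i+1), s i, s (i+1)]" by (rule rel_eq[OF relI1]) (use assms in auto)
  moreover have "valid_letter n (s i)" "valid_letter n (s (i+1))" using assms by (simp_all add: valid_letter_def)
  ultimately show ?thesis unfolding SG_def by (simp only: mult3)
qed

lemma braidR: assumes "1 \<le> i" "i \<le> n - 2"
  shows "RG n i \<otimes>\<^bsub>VB n\<^esub> RG n (i+1) \<otimes>\<^bsub>VB n\<^esub> RG n i = RG n (i+1) \<otimes>\<^bsub>VB n\<^esub> RG n i \<otimes>\<^bsub>VB n\<^esub> RG n (i+1)"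
proof -
  have "vb_class n [r i, r (i+1), r i] = vb_class n [r (i+1), r i, r (i+1)]" by (rule rel_eq[OF relI3]) (use assms in auto)
  moreover have "valid_letter n (r i)" "valid_letter n (r (i+1))" using assms by (simp_all add: valid_letter_def)
  ultimately show ?thesis unfolding RG_def by (simp only: mult3)
qed

lemma commSS: assumes "1 \<le> i" "i \<le> n - 1" "1 \<le> j" "j \<le> n - 1" "j \<ge> i + 2"
  shows "SG n i \<otimes>\<^bsub>VB n\<^esub> SG n j = SG n j \<otimes>\<^bsub>VB n\<^esub> SG n i"
proof -
  have "vb_class n [s i, s j] = vb_class n [s j, s i]" by (rule rel_eq[OF relI2]) (use assms in auto)
  moreover have "valid_letter n (s i)" "valid_letter n (s j)" using assms by (simp_all add: valid_letter_def)
  ultimately show ?thesis unfolding SG_def by (simp only: mult2)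
qed

lemma commRR: assumes "1 \<le> i" "i \<le> n - 1" "1 \<le> j" "j \<le> n - 1" "j \<ge> i + 2"
  shows "RG n i \<otimes>\<^bsub>VB n\<^esub> RG n j = RG n j \<otimes>\<^bsub>VB n\<^esub> RG n i"
proof -
  have "vb_class n [r i, r j] = vb_class n [r j, r i]" by (rule rel_eq[OF relI4]) (use assms in auto)
  moreover have "valid_letter n (r i)" "valid_letter n (r j)" using assms by (simp_all add: valid_letter_def)
  ultimately show ?thesis unfolding RG_def by (simp only: mult2)
qed

lemma commSR: assumes "1 \<le> i" "i \<le> n - 1" "1 \<le> j" "j \<le> n - 1" "j \<ge> i + 2"
  shows "SG n i \<otimes>\<^bsub>VB n\<^esub> RG n j = RG n j \<otimes>\<^bsub>VB n\<^esub> SG n i"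
proof -
  have "vb_class n [s i, r j] = vb_class n [r j, s i]" by (rule rel_eq[OF relI6]) (use assms in auto)
  moreover have "valid_letter n (s i)" "valid_letter n (r j)" using assms by (simp_all add: valid_letter_def)
  ultimately show ?thesis unfolding SG_def RG_def by (simp only: mult2)
qed

lemma letter_gen: "valid_letter n x \<Longrightarrow>
   vb_class n [x] \<in> generate (VB n) ({SG n i |i. 1 \<le> i \<and> i \<le> n - 1} \<union> {RG n i |i. 1 \<le> i \<and> i \<le> n - 1})"
proof -
  assume v: "valid_letter n x"
  interpret group "VB n" by (rule group_VB)
  let ?T = "{SG n i |i. 1 \<le> i \<and> i \<le> n - 1} \<union> {RG n i |i. 1 \<le> i \<and> i \<le> n - 1}"
  have xin: "vb_class n [x] \<in> carrier (VB n)" using v by (auto simp: carrier_VB)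
  have ixin: "vb_class n [inv_letter x] \<in> carrier (VB n)" using v by (auto simp: carrier_VB)
  have "vb_class n [inv_letter x] \<otimes>\<^bsub>VB n\<^esub> vb_class n [x] = \<one>\<^bsub>VB n\<^esub>"
    using v winv_cancel[of n "[x]"] by (simp add: mult_class one_VB class_eq_iff winv_def)
  then have invx: "inv\<^bsub>VB n\<^esub> vb_class n [x] = vb_class n [inv_letter x]"
    by (rule inv_equality[OF _ xin ixin])
  obtain b g where x: "x = (b, g)" by (rule prod.exhaust)
  show ?thesis
  proof (cases g)
    case (Sig i)
    then have i: "1 \<le> i \<and> i \<le> n - 1" using v x by (simp add: valid_letter_def)
    then have inT: "SG n i \<in> ?T" by (intro UnI1) auto
    show ?thesis
    proof (cases b)
      case True
      have eq: "vb_class n [x] = SG n i" using x Sig True by (simp add: SG_def)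
      show ?thesis unfolding eq by (rule generate.incl[OF inT])
    next
      case False
      have "inv\<^bsub>VB n\<^esub> vb_class n [x] = SG n i"
        using invx x Sig False by (simp add: SG_def inv_letter_def)
      then have "inv\<^bsub>VB n\<^esub> (inv\<^bsub>VB n\<^esub> vb_class n [x]) = inv\<^bsub>VB n\<^esub> SG n i" by simp
      then have eq: "vb_class n [x] = inv\<^bsub>VB n\<^esub> SG n i"
        using group.inv_inv[OF group_VB xin] by simp
      show ?thesis unfolding eq by (rule generate.inv[OF inT])
    qed
  next
    case (Rho i)
    then have i: "1 \<le> i \<and> i \<le> n - 1" using v x by (simp add: valid_letter_def)
    then have inT: "RG n i \<in> ?T" by (intro UnI2) auto
    show ?thesis
    proof (cases b)
      case True
      have eq: "vb_class n [x] = RG n i" using x Rho True by (simp add: RG_def)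
      show ?thesis unfolding eq by (rule generate.incl[OF inT])
    next
      case False
      have "inv\<^bsub>VB n\<^esub> vb_class n [x] = RG n i"
        using invx x Rho False by (simp add: RG_def inv_letter_def)
      then have "inv\<^bsub>VB n\<^esub> (inv\<^bsub>VB n\<^esub> vb_class n [x]) = inv\<^bsub>VB n\<^esub> RG n i" by simp
      then have eq: "vb_class n [x] = inv\<^bsub>VB n\<^esub> RG n i"
        using group.inv_inv[OF group_VB xin] by simp
      show ?thesis unfolding eq by (rule generate.inv[OF inT])
    qed
  qed
qed

lemma VB_generated:
  "carrier (VB n) \<subseteq> generate (VB n) ({SG n i |i. 1 \<le> i \<and> i \<le> n - 1} \<union> {RG n i |i. 1 \<le> i \<and> i \<le> n - 1})"
proof -
  let ?T = "{SG n i |i. 1 \<le> i \<and> i \<le> n - 1} \<union> {RG n i |i. 1 \<le> i \<and> i \<le> n - 1}"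
  have *: "valid_word n w \<Longrightarrow> vb_class n w \<in> generate (VB n) ?T" for w
  proof (induction w)
    case Nil show ?case unfolding one_VB[symmetric] by (rule generate.one)
  next
    case (Cons x w)
    from Cons.prems have vx: "valid_letter n x" and vw: "valid_word n w" by simp_all
    have eq: "vb_class n (x # w) = vb_class n [x] \<otimes>\<^bsub>VB n\<^esub> vb_class n w"
      using mult_class[OF _ vw, of "[x]"] vx by simp
    show ?case unfolding eq by (rule generate.eng[OF letter_gen[OF vx] Cons.IH[OF vw]])
  qed
  show ?thesis
  proof
    fix y assume "y \<in> carrier (VB n)"
    then obtain w where "valid_word n w" "y = vb_class n w" unfolding carrier_VB by blast
    then show "y \<in> generate (VB n) ?T" using * by simp
  qed
qed



lemma (in group) inv_cancel_l: "x \<in> carrier G \<Longrightarrow> y \<in> carrier G \<Longrightarrow> inv x \<otimes> (x \<otimes> y) = y"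
  by (simp add: m_assoc[symmetric])
lemma (in group) cancel_inv_l: "x \<in> carrier G \<Longrightarrow> y \<in> carrier G \<Longrightarrow> x \<otimes> (inv x \<otimes> y) = y"
  by (simp add: m_assoc[symmetric])

lemma (in group) comm_invR:
  assumes a: "a \<in> carrier G" and c: "c \<in> carrier G" and h: "a \<otimes> c = c \<otimes> a"
  shows "a \<otimes> inv c = inv c \<otimes> a"
proof -
  have "a \<otimes> inv c = inv c \<otimes> (c \<otimes> a) \<otimes> inv c" using a c by (simp add: m_assoc inv_cancel_l)
  also have "\<dots> = inv c \<otimes> (a \<otimes> c) \<otimes> inv c" by (simp only: h)
  also have "\<dots> = inv c \<otimes> a" using a c by (simp add: m_assoc)
  finally show ?thesis .
qed

lemma (in group) cancel_braid:
  assumes A: "A \<in> carrier G" and B: "B \<in> carrier G"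
    and br: "A \<otimes> B \<otimes> A = B \<otimes> A \<otimes> B" and cm: "A \<otimes> B = B \<otimes> A"
  shows "A = B"
proof -
  have "A \<otimes> (A \<otimes> B) = A \<otimes> (B \<otimes> A)" by (simp only: cm)
  also have "\<dots> = A \<otimes> B \<otimes> A" using A B by (simp add: m_assoc)
  also have "\<dots> = B \<otimes> A \<otimes> B" by (rule br)
  also have "\<dots> = A \<otimes> B \<otimes> B" by (simp only: cm)
  also have "\<dots> = A \<otimes> (B \<otimes> B)" using A B by (simp add: m_assoc)
  finally have "A \<otimes> B = B \<otimes> B" using A B by simp
  then show ?thesis using A B by simp
qed

lemma (in group) lemA:
  assumes A: "A \<in> carrier G" and B: "B \<in> carrier G" and C: "C \<in> carrier G"
    and br: "A \<otimes> B \<otimes> A = B \<otimes> A \<otimes> B" and ac: "A \<otimes> C = C \<otimes> A" and bc: "B \<otimes> C = C \<otimes> B"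
    and y: "(A \<otimes> inv C) \<otimes> (B \<otimes> inv C) = (B \<otimes> inv C) \<otimes> (A \<otimes> inv C)"
  shows "A = B"
proof -
  have ai: "A \<otimes> inv C = inv C \<otimes> A" by (rule comm_invR[OF A C ac])
  have bi: "B \<otimes> inv C = inv C \<otimes> B" by (rule comm_invR[OF B C bc])
  have "A \<otimes> B \<otimes> inv C \<otimes> inv C = A \<otimes> (B \<otimes> inv C) \<otimes> inv C" using A B C by (simp add: m_assoc)
  also have "\<dots> = A \<otimes> (inv C \<otimes> B) \<otimes> inv C" by (simp only: bi)
  also have "\<dots> = (A \<otimes> inv C) \<otimes> (B \<otimes> inv C)" using A B C by (simp add: m_assoc)
  also have "\<dots> = (B \<otimes> inv C) \<otimes> (A \<otimes> inv C)" by (rule y)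
  also have "\<dots> = B \<otimes> (inv C \<otimes> A) \<otimes> inv C" using A B C by (simp add: m_assoc)
  also have "\<dots> = B \<otimes> (A \<otimes> inv C) \<otimes> inv C" by (simp only: ai)
  also have "\<dots> = B \<otimes> A \<otimes> inv C \<otimes> inv C" using A B C by (simp add: m_assoc)
  finally have "A \<otimes> B \<otimes> inv C \<otimes> inv C = B \<otimes> A \<otimes> inv C \<otimes> inv C" .
  then have "A \<otimes> B = B \<otimes> A" using A B C by simp
  then show ?thesis using cancel_braid[OF A B br] by simp
qed

lemma (in group) comm_one_iff:
  assumes U: "U \<in> carrier G" and V: "V \<in> carrier G"
  shows "(U \<otimes> V \<otimes> inv U \<otimes> inv V = \<one>) = (U \<otimes> V = V \<otimes> U)"
proof
  assume h: "U \<otimes> V \<otimes> inv U \<otimes> inv V = \<one>"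
  have "U \<otimes> V = U \<otimes> V \<otimes> inv U \<otimes> inv V \<otimes> V \<otimes> U" using U V by (simp add: m_assoc inv_cancel_l)
  also have "\<dots> = V \<otimes> U" using h U V by simp
  finally show "U \<otimes> V = V \<otimes> U" .
next
  assume h: "U \<otimes> V = V \<otimes> U"
  have "U \<otimes> V \<otimes> inv U \<otimes> inv V = V \<otimes> U \<otimes> inv U \<otimes> inv V" by (simp only: h)
  also have "\<dots> = \<one>" using U V by (simp add: m_assoc)
  finally show "U \<otimes> V \<otimes> inv U \<otimes> inv V = \<one>" .
qed



lemma (in group) modhom:
  assumes N: "N \<lhd> G" shows "group_hom G (G Mod N) (\<lambda>a. N #> a)"
  by (rule group_hom.intro[OF is_group normal.factorgroup_is_group[OF N]])
     (simp add: group_hom_axioms_def normal.r_coset_hom_Mod[OF N])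

lemma (in group) modN_one:
  assumes N: "N \<lhd> G" and x: "x \<in> carrier G"
  shows "(x \<in> N) = (N #> x = \<one>\<^bsub>G Mod N\<^esub>)"
proof -
  have sN: "subgroup N G" using N by (simp add: normal_def)
  have one: "\<one>\<^bsub>G Mod N\<^esub> = N" by (simp add: FactGroup_def)
  show ?thesis
  proof
    assume "x \<in> N" then show "N #> x = \<one>\<^bsub>G Mod N\<^esub>" using coset_join2[OF x sN] one by simp
  next
    assume "N #> x = \<one>\<^bsub>G Mod N\<^esub>"
    then show "x \<in> N" using rcos_self[OF x sN] one by simp
  qed
qed

lemma (in group) mod_comm:
  assumes N: "N \<lhd> G" and a: "a \<in> carrier G" and b: "b \<in> carrier G"
  shows "(a \<otimes> b \<otimes> inv a \<otimes> inv b \<in> N) =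
     ((N #> a) \<otimes>\<^bsub>G Mod N\<^esub> (N #> b) = (N #> b) \<otimes>\<^bsub>G Mod N\<^esub> (N #> a))"
proof -
  interpret h: group_hom G "G Mod N" "\<lambda>a. N #> a" by (rule modhom[OF N])
  have "(a \<otimes> b \<otimes> inv a \<otimes> inv b \<in> N) = (N #> (a \<otimes> b \<otimes> inv a \<otimes> inv b) = \<one>\<^bsub>G Mod N\<^esub>)"
    using modN_one[OF N] a b by simp
  also have "N #> (a \<otimes> b \<otimes> inv a \<otimes> inv b) =
     (N #> a) \<otimes>\<^bsub>G Mod N\<^esub> (N #> b) \<otimes>\<^bsub>G Mod N\<^esub> inv\<^bsub>G Mod N\<^esub> (N #> a) \<otimes>\<^bsub>G Mod N\<^esub> inv\<^bsub>G Mod N\<^esub> (N #> b)"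
    using a b by (simp add: h.hom_mult h.hom_inv)
  finally show ?thesis using h.H.comm_one_iff a b by simp
qed

lemma (in group) mod_eq:
  assumes N: "N \<lhd> G" and a: "a \<in> carrier G" and b: "b \<in> carrier G"
    and e: "N #> a = N #> b"
  shows "a \<otimes> inv b \<in> N"
proof -
  interpret h: group_hom G "G Mod N" "\<lambda>a. N #> a" by (rule modhom[OF N])
  have "N #> (a \<otimes> inv b) = (N #> a) \<otimes>\<^bsub>G Mod N\<^esub> inv\<^bsub>G Mod N\<^esub> (N #> b)"
    using a b by (simp add: h.hom_mult h.hom_inv)
  also have "\<dots> = \<one>\<^bsub>G Mod N\<^esub>" using e h.H.r_inv[OF h.hom_closed[OF b]] by simp
  finally show ?thesis using modN_one[OF N] a b by simp
qed

lemma (in group_hom) centr_subgroup: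
  assumes x: "x \<in> carrier G"
  shows "subgroup {y \<in> carrier G. h x \<otimes>\<^bsub>H\<^esub> h y = h y \<otimes>\<^bsub>H\<^esub> h x} G"
proof (rule G.subgroupI)
  show "{y \<in> carrier G. h x \<otimes>\<^bsub>H\<^esub> h y = h y \<otimes>\<^bsub>H\<^esub> h x} \<noteq> {}" using x by auto
next
  fix a assume a: "a \<in> {y \<in> carrier G. h x \<otimes>\<^bsub>H\<^esub> h y = h y \<otimes>\<^bsub>H\<^esub> h x}"
  then have "h a \<otimes>\<^bsub>H\<^esub> h x = h x \<otimes>\<^bsub>H\<^esub> h a" by simp
  then have "h x \<otimes>\<^bsub>H\<^esub> inv\<^bsub>H\<^esub> h a = inv\<^bsub>H\<^esub> h a \<otimes>\<^bsub>H\<^esub> h x"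
    using a x H.comm_invR[of "h x" "h a"] by simp
  then show "inv a \<in> {y \<in> carrier G. h x \<otimes>\<^bsub>H\<^esub> h y = h y \<otimes>\<^bsub>H\<^esub> h x}" using a by (simp add: hom_inv)
next
  fix a b assume a: "a \<in> {y \<in> carrier G. h x \<otimes>\<^bsub>H\<^esub> h y = h y \<otimes>\<^bsub>H\<^esub> h x}"
    and b: "b \<in> {y \<in> carrier G. h x \<otimes>\<^bsub>H\<^esub> h y = h y \<otimes>\<^bsub>H\<^esub> h x}"
  then have ac: "a \<in> carrier G" and bc: "b \<in> carrier G"
    and ea: "h x \<otimes>\<^bsub>H\<^esub> h a = h a \<otimes>\<^bsub>H\<^esub> h x" and eb: "h x \<otimes>\<^bsub>H\<^esub> h b = h b \<otimes>\<^bsub>H\<^esub> h x" by auto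
  have "h x \<otimes>\<^bsub>H\<^esub> (h a \<otimes>\<^bsub>H\<^esub> h b) = (h x \<otimes>\<^bsub>H\<^esub> h a) \<otimes>\<^bsub>H\<^esub> h b"
    using ac bc x by (simp add: H.m_assoc)
  also have "\<dots> = (h a \<otimes>\<^bsub>H\<^esub> h x) \<otimes>\<^bsub>H\<^esub> h b" by (simp only: ea)
  also have "\<dots> = h a \<otimes>\<^bsub>H\<^esub> (h x \<otimes>\<^bsub>H\<^esub> h b)" using ac bc x by (simp add: H.m_assoc)
  also have "\<dots> = h a \<otimes>\<^bsub>H\<^esub> (h b \<otimes>\<^bsub>H\<^esub> h x)" by (simp only: eb)
  also have "\<dots> = (h a \<otimes>\<^bsub>H\<^esub> h b) \<otimes>\<^bsub>H\<^esub> h x" using ac bc x by (simp add: H.m_assoc)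
  finally show "a \<otimes> b \<in> {y \<in> carrier G. h x \<otimes>\<^bsub>H\<^esub> h y = h y \<otimes>\<^bsub>H\<^esub> h x}"
    using ac bc by (simp add: hom_mult)
qed auto

lemma (in group_hom) all_commute:
  assumes T: "T \<subseteq> carrier G" and gen: "carrier G \<subseteq> generate G T"
    and cT: "\<And>x y. x \<in> T \<Longrightarrow> y \<in> T \<Longrightarrow> h x \<otimes>\<^bsub>H\<^esub> h y = h y \<otimes>\<^bsub>H\<^esub> h x"
    and a: "a \<in> carrier G" and b: "b \<in> carrier G"
  shows "h a \<otimes>\<^bsub>H\<^esub> h b = h b \<otimes>\<^bsub>H\<^esub> h a"
proof -
  have c1: "h x \<otimes>\<^bsub>H\<^esub> h y = h y \<otimes>\<^bsub>H\<^esub> h x" if x: "x \<in> T" and y: "y \<in> carrier G" for x y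
  proof -
    have "T \<subseteq> {y \<in> carrier G. h x \<otimes>\<^bsub>H\<^esub> h y = h y \<otimes>\<^bsub>H\<^esub> h x}" using cT x T by auto
    then have "generate G T \<subseteq> {y \<in> carrier G. h x \<otimes>\<^bsub>H\<^esub> h y = h y \<otimes>\<^bsub>H\<^esub> h x}"
      using G.generate_subgroup_incl centr_subgroup x T by blast
    then show ?thesis using gen y by blast
  qed
  have "h a \<otimes>\<^bsub>H\<^esub> h y = h y \<otimes>\<^bsub>H\<^esub> h a" if "y \<in> T" for y
    by (rule sym, rule c1[OF that a])
  then have "T \<subseteq> {y \<in> carrier G. h a \<otimes>\<^bsub>H\<^esub> h y = h y \<otimes>\<^bsub>H\<^esub> h a}" using T by auto
  then have "generate G T \<subseteq> {y \<in> carrier G. h a \<otimes>\<^bsub>H\<^esub> h y = h y \<otimes>\<^bsub>H\<^esub> h a}"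
    using G.generate_subgroup_incl centr_subgroup a by blast
  then show ?thesis using gen b by blast
qed

lemma (in group) family_chain:
  fixes f :: "nat \<Rightarrow> 'a" and m :: nat
  assumes fc: "\<And>i. 1 \<le> i \<Longrightarrow> i \<le> m \<Longrightarrow> f i \<in> carrier G" and f12: "f 1 = f 2"
    and cm: "\<And>i. 1 \<le> i \<Longrightarrow> i + 2 \<le> m \<Longrightarrow> f i \<otimes> f (i+2) = f (i+2) \<otimes> f i"
    and br: "\<And>i. 1 \<le> i \<Longrightarrow> i + 2 \<le> m \<Longrightarrow>
        f (i+1) \<otimes> f (i+2) \<otimes> f (i+1) = f (i+2) \<otimes> f (i+1) \<otimes> f (i+2)"
  shows "1 \<le> i \<Longrightarrow> i \<le> m \<Longrightarrow> f i = f 1"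
proof -
  have step: "1 \<le> i \<Longrightarrow> i + 1 \<le> m \<Longrightarrow> f (i+1) = f i" for i
  proof (induction i)
    case 0 then show ?case by simp
  next
    case (Suc k)
    show ?case
    proof (cases "k = 0")
      case True then show ?thesis using f12 by (simp add: numeral_2_eq_2)
    next
      case False
      then have k: "1 \<le> k" "k + 2 \<le> m" using Suc.prems by auto
      have IH: "f (k+1) = f k" using Suc.IH k by simp
      have c1: "f (k+1) \<in> carrier G" "f (k+2) \<in> carrier G" using fc k by auto
      have "f (k+1) \<otimes> f (k+2) = f (k+2) \<otimes> f (k+1)" using cm[OF k] IH by simp
      then have "f (k+1) = f (k+2)" using cancel_braid[OF c1 br[OF k]] by simp
      then show ?thesis by simp
    qed
  qed
  show "1 \<le> i \<Longrightarrow> i \<le> m \<Longrightarrow> f i = f 1"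
  proof (induction i)
    case 0 then show ?case by simp
  next
    case (Suc k)
    show ?case
    proof (cases "k = 0")
      case True then show ?thesis by simp
    next
      case False
      then show ?thesis using Suc step[of k] by simp
    qed
  qed
qed



lemma (in group_hom) map2:
  "a \<in> carrier G \<Longrightarrow> b \<in> carrier G \<Longrightarrow> c \<in> carrier G \<Longrightarrow> d \<in> carrier G \<Longrightarrow>
   a \<otimes> b = c \<otimes> d \<Longrightarrow> h a \<otimes>\<^bsub>H\<^esub> h b = h c \<otimes>\<^bsub>H\<^esub> h d"
  by (metis hom_mult)

lemma (in group_hom) map3:
  "a \<in> carrier G \<Longrightarrow> b \<in> carrier G \<Longrightarrow> c \<in> carrier G \<Longrightarrow>
   a \<otimes> b \<otimes> a = b \<otimes> a \<otimes> b \<Longrightarrow> h a \<otimes>\<^bsub>H\<^esub> h b \<otimes>\<^bsub>H\<^esub> h a = h b \<otimes>\<^bsub>H\<^esub> h a \<otimes>\<^bsub>H\<^esub> h b"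
  by (metis hom_mult G.m_closed)

lemma (in group) fam:
  fixes xg :: "nat \<Rightarrow> 'a" and n :: nat
  assumes n5: "5 \<le> n" and xgc: "\<And>i. 1 \<le> i \<Longrightarrow> i \<le> n - 1 \<Longrightarrow> xg i \<in> carrier G"
   and bxg: "\<And>i. 1 \<le> i \<Longrightarrow> i \<le> n - 2 \<Longrightarrow> xg i \<otimes> xg (i+1) \<otimes> xg i = xg (i+1) \<otimes> xg i \<otimes> xg (i+1)"
   and cxg: "\<And>i j. 1 \<le> i \<Longrightarrow> i \<le> n - 1 \<Longrightarrow> 1 \<le> j \<Longrightarrow> j \<le> n - 1 \<Longrightarrow> j \<ge> i + 2 \<Longrightarrow> xg i \<otimes> xg j = xg j \<otimes> xg i"
   and i: "1 \<le> i" "i \<le> n - 1"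
  shows "derived G (derived G (carrier G)) #> xg i = derived G (derived G (carrier G)) #> xg 1"
proof -
  define D where "D = derived G (carrier G)"
  define K where "K = derived G D"
  have DN: "D \<lhd> G" unfolding D_def by (rule derived_self_is_normal)
  have KN: "K \<lhd> G" unfolding K_def by (rule derived_is_normal[OF DN])
  interpret h1: group_hom G "G Mod D" "\<lambda>a. D #> a" by (rule modhom[OF DN])
  interpret h2: group_hom G "G Mod K" "\<lambda>a. K #> a" by (rule modhom[OF KN])
  have com1: "(D #> a) \<otimes>\<^bsub>G Mod D\<^esub> (D #> b) = (D #> b) \<otimes>\<^bsub>G Mod D\<^esub> (D #> a)"
    if a: "a \<in> carrier G" and b: "b \<in> carrier G" for a b
  proof -
    have "a \<otimes> b \<otimes> inv a \<otimes> inv b \<in> derived_set G (carrier G)" using a b by blast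
    then have "a \<otimes> b \<otimes> inv a \<otimes> inv b \<in> D" unfolding D_def derived_def by (rule generate.incl)
    then show ?thesis using mod_comm[OF DN a b] by simp
  qed
  have e1: "D #> xg i = D #> xg (i+1)" if "1 \<le> i" "i \<le> n - 2" for i
  proof -
    have c: "xg i \<in> carrier G" "xg (i+1) \<in> carrier G" using xgc that by auto
    show ?thesis
      by (rule h1.H.cancel_braid[OF h1.hom_closed[OF c(1)] h1.hom_closed[OF c(2)]
           h1.map3[OF c(1) c(2) c(1) bxg[OF that]] com1[OF c]])
  qed
  have xgc1: "xg 1 \<in> carrier G" and xgc2: "xg 2 \<in> carrier G" and xgc4: "xg 4 \<in> carrier G"
    using xgc n5 by auto
  have t1: "D #> xg 1 = D #> xg (1+1)" by (rule e1) (use n5 in auto)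
  have t2: "D #> xg 2 = D #> xg (2+1)" by (rule e1) (use n5 in auto)
  have t3: "D #> xg 3 = D #> xg (3+1)" by (rule e1) (use n5 in auto)
  have n12: "(1::nat) + 1 = 2" "(2::nat) + 1 = 3" "(3::nat) + 1 = 4" by simp_all
  have "D #> xg 1 = D #> xg 4" using t1 t2 t3 unfolding n12 by simp
  then have y1: "xg 1 \<otimes> inv xg 4 \<in> D" by (rule mod_eq[OF DN xgc1 xgc4])
  have "D #> xg 2 = D #> xg 4" using t2 t3 unfolding n12 by simp
  then have y2: "xg 2 \<otimes> inv xg 4 \<in> D" by (rule mod_eq[OF DN xgc2 xgc4])
  have yc: "xg 1 \<otimes> inv xg 4 \<in> carrier G" "xg 2 \<otimes> inv xg 4 \<in> carrier G" using xgc1 xgc2 xgc4 by auto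
  have "(xg 1 \<otimes> inv xg 4) \<otimes> (xg 2 \<otimes> inv xg 4) \<otimes> inv (xg 1 \<otimes> inv xg 4) \<otimes> inv (xg 2 \<otimes> inv xg 4)
        \<in> derived_set G D" using y1 y2 by blast
  then have "(xg 1 \<otimes> inv xg 4) \<otimes> (xg 2 \<otimes> inv xg 4) \<otimes> inv (xg 1 \<otimes> inv xg 4) \<otimes> inv (xg 2 \<otimes> inv xg 4)
        \<in> K" unfolding K_def derived_def by (rule generate.incl)
  then have "(K #> (xg 1 \<otimes> inv xg 4)) \<otimes>\<^bsub>G Mod K\<^esub> (K #> (xg 2 \<otimes> inv xg 4)) =
             (K #> (xg 2 \<otimes> inv xg 4)) \<otimes>\<^bsub>G Mod K\<^esub> (K #> (xg 1 \<otimes> inv xg 4))"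
    using mod_comm[OF KN yc] by simp
  then have yy: "((K #> xg 1) \<otimes>\<^bsub>G Mod K\<^esub> inv\<^bsub>G Mod K\<^esub> (K #> xg 4)) \<otimes>\<^bsub>G Mod K\<^esub> ((K #> xg 2) \<otimes>\<^bsub>G Mod K\<^esub> inv\<^bsub>G Mod K\<^esub> (K #> xg 4)) =
             ((K #> xg 2) \<otimes>\<^bsub>G Mod K\<^esub> inv\<^bsub>G Mod K\<^esub> (K #> xg 4)) \<otimes>\<^bsub>G Mod K\<^esub> ((K #> xg 1) \<otimes>\<^bsub>G Mod K\<^esub> inv\<^bsub>G Mod K\<^esub> (K #> xg 4))"
    using xgc1 xgc2 xgc4 by (simp add: h2.hom_mult h2.hom_inv)
  have br12': "xg 1 \<otimes> xg (1+1) \<otimes> xg 1 = xg (1+1) \<otimes> xg 1 \<otimes> xg (1+1)" by (rule bxg) (use n5 in auto)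
  have br12: "xg 1 \<otimes> xg 2 \<otimes> xg 1 = xg 2 \<otimes> xg 1 \<otimes> xg 2" using br12' unfolding n12 .
  have c14: "xg 1 \<otimes> xg 4 = xg 4 \<otimes> xg 1" using cxg[of 1 4] n5 by simp
  have c24: "xg 2 \<otimes> xg 4 = xg 4 \<otimes> xg 2" using cxg[of 2 4] n5 by simp
  have f12: "K #> xg 1 = K #> xg 2"
    by (rule h2.H.lemA[OF h2.hom_closed[OF xgc1] h2.hom_closed[OF xgc2] h2.hom_closed[OF xgc4]
          h2.map3[OF xgc1 xgc2 xgc1 br12] h2.map2[OF xgc1 xgc4 xgc4 xgc1 c14] h2.map2[OF xgc2 xgc4 xgc4 xgc2 c24] yy])
  have "K #> xg i = K #> xg 1"
  proof (rule h2.H.family_chain[where f = "\<lambda>i. K #> xg i" and m = "n - 1"])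
    show "\<And>i. 1 \<le> i \<Longrightarrow> i \<le> n - 1 \<Longrightarrow> K #> xg i \<in> carrier (G Mod K)"
      using xgc h2.hom_closed by blast
    show "K #> xg 1 = K #> xg 2" by (rule f12)
    show "(K #> xg i) \<otimes>\<^bsub>G Mod K\<^esub> (K #> xg (i + 2)) = (K #> xg (i + 2)) \<otimes>\<^bsub>G Mod K\<^esub> (K #> xg i)"
      if "1 \<le> i" "i + 2 \<le> n - 1" for i
    proof -
      have c: "xg i \<in> carrier G" "xg (i+2) \<in> carrier G" using xgc that by auto
      show ?thesis by (rule h2.map2[OF c(1) c(2) c(2) c(1) cxg]) (use that in auto)
    qed
    show "(K #> xg (i + 1)) \<otimes>\<^bsub>G Mod K\<^esub> (K #> xg (i + 2)) \<otimes>\<^bsub>G Mod K\<^esub> (K #> xg (i + 1)) =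
          (K #> xg (i + 2)) \<otimes>\<^bsub>G Mod K\<^esub> (K #> xg (i + 1)) \<otimes>\<^bsub>G Mod K\<^esub> (K #> xg (i + 2))"
      if "1 \<le> i" "i + 2 \<le> n - 1" for i
    proof -
      have c: "xg (i+1) \<in> carrier G" "xg (i+2) \<in> carrier G" using xgc that by auto
      have b: "xg (i+1) \<otimes> xg (i+1+1) \<otimes> xg (i+1) = xg (i+1+1) \<otimes> xg (i+1) \<otimes> xg (i+1+1)"
        by (rule bxg) (use that in auto)
      then have b': "xg (i+1) \<otimes> xg (i+2) \<otimes> xg (i+1) = xg (i+2) \<otimes> xg (i+1) \<otimes> xg (i+2)"
        by (simp add: add.assoc)
      show ?thesis by (rule h2.map3[OF c(1) c(2) c(1) b'])
    qed
  qed (use i in auto)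
  then show ?thesis unfolding K_def D_def .
qed



lemma (in group) perfect_abstract:
  fixes S R :: "nat \<Rightarrow> 'a" and n :: nat
  assumes n5: "5 \<le> n"
    and Sc: "\<And>i. 1 \<le> i \<Longrightarrow> i \<le> n - 1 \<Longrightarrow> S i \<in> carrier G"
    and Rc: "\<And>i. 1 \<le> i \<Longrightarrow> i \<le> n - 1 \<Longrightarrow> R i \<in> carrier G"
    and gen: "carrier G \<subseteq> generate G ({S i |i. 1 \<le> i \<and> i \<le> n - 1} \<union> {R i |i. 1 \<le> i \<and> i \<le> n - 1})"
    and bS: "\<And>i. 1 \<le> i \<Longrightarrow> i \<le> n - 2 \<Longrightarrow> S i \<otimes> S (i+1) \<otimes> S i = S (i+1) \<otimes> S i \<otimes> S (i+1)"
    and bR: "\<And>i. 1 \<le> i \<Longrightarrow> i \<le> n - 2 \<Longrightarrow> R i \<otimes> R (i+1) \<otimes> R i = R (i+1) \<otimes> R i \<otimes> R (i+1)"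
    and cS: "\<And>i j. 1 \<le> i \<Longrightarrow> i \<le> n - 1 \<Longrightarrow> 1 \<le> j \<Longrightarrow> j \<le> n - 1 \<Longrightarrow> j \<ge> i + 2 \<Longrightarrow> S i \<otimes> S j = S j \<otimes> S i"
    and cR: "\<And>i j. 1 \<le> i \<Longrightarrow> i \<le> n - 1 \<Longrightarrow> 1 \<le> j \<Longrightarrow> j \<le> n - 1 \<Longrightarrow> j \<ge> i + 2 \<Longrightarrow> R i \<otimes> R j = R j \<otimes> R i"
    and cSR: "\<And>i j. 1 \<le> i \<Longrightarrow> i \<le> n - 1 \<Longrightarrow> 1 \<le> j \<Longrightarrow> j \<le> n - 1 \<Longrightarrow> j \<ge> i + 2 \<Longrightarrow> S i \<otimes> R j = R j \<otimes> S i"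
  shows "derived G (derived G (carrier G)) = derived G (carrier G)"
proof -
  define D where "D = derived G (carrier G)"
  define K where "K = derived G D"
  have DN: "D \<lhd> G" unfolding D_def by (rule derived_self_is_normal)
  have KN: "K \<lhd> G" unfolding K_def by (rule derived_is_normal[OF DN])
  have Dsg: "subgroup D G" unfolding D_def by (rule derived_is_subgroup) simp
  have Dc: "D \<subseteq> carrier G" using Dsg by (rule subgroup.subset)
  have Ksg: "subgroup K G" unfolding K_def by (rule derived_is_subgroup[OF Dc])
  interpret h2: group_hom G "G Mod K" "\<lambda>a. K #> a" by (rule modhom[OF KN])
  have "K \<subseteq> D" unfolding K_def by (rule derived_incl[OF subset_refl Dsg])
  moreover have "D \<subseteq> K"
  proof -
    have eS: "K #> S i = K #> S 1" if "1 \<le> i" "i \<le> n - 1" for i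
      unfolding K_def D_def by (rule fam[where xg = S, OF n5 Sc bS cS that])
    have eR: "K #> R i = K #> R 1" if "1 \<le> i" "i \<le> n - 1" for i
      unfolding K_def D_def by (rule fam[where xg = R, OF n5 Rc bR cR that])
    have S1: "S 1 \<in> carrier G" and R1: "R 1 \<in> carrier G" and R3: "R 3 \<in> carrier G"
      using Sc Rc n5 by auto
    have "(K #> S 1) \<otimes>\<^bsub>G Mod K\<^esub> (K #> R 3) = (K #> R 3) \<otimes>\<^bsub>G Mod K\<^esub> (K #> S 1)"
      by (rule h2.map2[OF S1 R3 R3 S1 cSR]) (use n5 in auto)
    moreover have "K #> R 3 = K #> R 1" by (rule eR) (use n5 in auto)
    ultimately have sr: "(K #> S 1) \<otimes>\<^bsub>G Mod K\<^esub> (K #> R 1) = (K #> R 1) \<otimes>\<^bsub>G Mod K\<^esub> (K #> S 1)"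
      by simp
    let ?T = "{S i |i. 1 \<le> i \<and> i \<le> n - 1} \<union> {R i |i. 1 \<le> i \<and> i \<le> n - 1}"
    have T: "?T \<subseteq> carrier G" using Sc Rc by auto
    have img: "K #> x = K #> S 1 \<or> K #> x = K #> R 1" if "x \<in> ?T" for x
      using that eS eR by auto
    have cT: "(K #> x) \<otimes>\<^bsub>G Mod K\<^esub> (K #> y) = (K #> y) \<otimes>\<^bsub>G Mod K\<^esub> (K #> x)"
      if "x \<in> ?T" "y \<in> ?T" for x y
      using img[OF that(1)] img[OF that(2)] sr by auto
    have "a \<otimes> b \<otimes> inv a \<otimes> inv b \<in> K" if a: "a \<in> carrier G" and b: "b \<in> carrier G" for a b
      using mod_comm[OF KN a b] h2.all_commute[OF T gen cT a b] by simp
    then have "derived_set G (carrier G) \<subseteq> K" by blast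
    then show "D \<subseteq> K" unfolding D_def derived_def by (rule generate_subgroup_incl[OF _ Ksg])
  qed
  ultimately show ?thesis unfolding K_def D_def by blast
qed

theorem proposition4p5:
  fixes n :: nat
  assumes "n \<ge> 5"
  shows "derived (VB n) (derived (VB n) (carrier (VB n))) = derived (VB n) (carrier (VB n))"
proof -
  interpret group "VB n" by (rule group_VB)
  show ?thesis
    by (rule perfect_abstract[OF assms SG_carrier RG_carrier VB_generated braidS braidR commSS commRR commSR])
qed

end
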